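(* Let $\mathbb{F}\in\{\mathbb{R},\mathbb{C},\mathbb{H}\}$, $G=\mathrm{SL}(3,\mathbb{F})$, $g\in G$ and $t\in V$. If $g\in Ka_tH$, then $$\Phi(g)=\Big(\sum_{i=1}^3e^{4t_i}\Big)\Big(\sum_{i=1}^3e^{-4t_i}\Big)=3+2\cosh(4(t_1-t_2))+2\cosh(4(t_1-t_3))+2\cosh(4(t_2-t_3)).$$ In particular $\Phi$ is left $K$-invariant, right $H$-invariant, $\Phi\circ\sigma=\Phi$, and the restriction of $\Phi$ to $A=\{a_t:t\in V\}$ is invariant under the Weyl group (permutations of $t_1,t_2,t_3$).
   Context: $\theta(g)=(g^{-1})^\dagger$, $J=\mathrm{diag}(1,-1,-1)$, $\sigma(g)=J\theta(g)J$, $K=G^\theta$, $H$ the identity component of $G^\sigma$. $\Phi(g)=\|g\sigma(g)^{-1}\|_{HS}^2\,\|\sigma(g)g^{-1}\|_{HS}^2$ where $\|X\|_{HS}^2=\sum_{i,j}|X_{ij}|^2$. $V=\{t\in\mathbb{R}^3:t_1+t_2+t_3=0\}$ and $a_t=\mathrm{diag}(e^{t_1},e^{t_2},e^{t_3})$. *)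

theory Defs
  imports "HOL-Analysis.Analysis"
begin

datatype quat = Quat (qRe: real) (qI: real) (qJ: real) (qK: real)

lemma quat_eq_iff: "x = y \<longleftrightarrow> qRe x = qRe y \<and> qI x = qI y \<and> qJ x = qJ y \<and> qK x = qK y"
  by (cases x; cases y) auto

instantiation quat :: ring_1
begin
definition "0 = Quat 0 0 0 0"
definition "1 = Quat 1 0 0 0"
definition "x + y = Quat (qRe x + qRe y) (qI x + qI y) (qJ x + qJ y) (qK x + qK y)"
definition "x - y = Quat (qRe x - qRe y) (qI x - qI y) (qJ x - qJ y) (qK x - qK y)"
definition "- x = Quat (- qRe x) (- qI x) (- qJ x) (- qK x)"
definition "x * y = Quat
   (qRe x * qRe y - qI x * qI y - qJ x * qJ y - qK x * qK y)
   (qRe x * qI y + qI x * qRe y + qJ x * qK y - qK x * qJ y)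
   (qRe x * qJ y - qI x * qK y + qJ x * qRe y + qK x * qI y)
   (qRe x * qK y + qI x * qJ y - qJ x * qI y + qK x * qRe y)"
instance
  by standard (simp_all add: quat_eq_iff zero_quat_def one_quat_def plus_quat_def
      minus_quat_def uminus_quat_def times_quat_def algebra_simps)
end

instantiation quat :: real_algebra_1
begin
definition "scaleR r x = Quat (r * qRe x) (r * qI x) (r * qJ x) (r * qK x)"
instance
  by standard (simp_all add: quat_eq_iff scaleR_quat_def zero_quat_def one_quat_def plus_quat_def
      minus_quat_def uminus_quat_def times_quat_def algebra_simps)
end

text \<open>Class of the three scalar types: standard conjugation (cj), real coordinates
  (coords, used for the Euclidean topology and the modulus) and the group SL(3,F).\<close>

class sl3_scalar = real_algebra_1 +
  fixes cj :: "'a \<Rightarrow> 'a"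
    and coords :: "'a \<Rightarrow> real^4"
    and SL3 :: "('a^3^3) set"

text \<open>Complex 2x2-block representation of a quaternion q = z + w j
  (z = a + b i, w = c + d i), block [[z, w], [-cnj w, cnj z]].\<close>

definition quat_block :: "quat \<Rightarrow> 2 \<Rightarrow> 2 \<Rightarrow> complex" where
  "quat_block q s r =
     (let z = Complex (qRe q) (qI q); w = Complex (qJ q) (qK q) in
      if s = 0 \<and> r = 0 then z else if s = 0 \<and> r = 1 then w
      else if s = 1 \<and> r = 0 then - cnj w else cnj z)"

definition quat_cmat :: "quat^3^3 \<Rightarrow> complex^(3 \<times> 2)^(3 \<times> 2)" where
  "quat_cmat g = (\<chi> p q. quat_block (g $ fst p $ fst q) (snd p) (snd q))"

instantiation real :: sl3_scalar
begin
definition "cj (x::real) = x"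
definition "coords (x::real) = vector [x, 0, 0, 0]"
definition "SL3 = {g :: real^3^3. det g = 1}"
instance ..
end

instantiation complex :: sl3_scalar
begin
definition "cj (z::complex) = cnj z"
definition "coords (z::complex) = vector [Re z, Im z, 0, 0]"
definition "SL3 = {g :: complex^3^3. det g = 1}"
instance ..
end

instantiation quat :: sl3_scalar
begin
definition "cj q = Quat (qRe q) (- qI q) (- qJ q) (- qK q)"
definition "coords q = vector [qRe q, qI q, qJ q, qK q]"
definition "SL3 = {g :: quat^3^3. det (quat_cmat g) = 1}"
instance ..
end

abbreviation G :: "(('a::sl3_scalar)^3^3) set" where "G \<equiv> SL3"

definition absq :: "'a::sl3_scalar \<Rightarrow> real" where
  "absq x = (norm (coords x))\<^sup>2"

definition ctrans :: "('a::sl3_scalar)^3^3 \<Rightarrow> 'a^3^3" where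
  "ctrans g = (\<chi> i j. cj (g $ j $ i))"

definition theta :: "('a::sl3_scalar)^3^3 \<Rightarrow> 'a^3^3" where
  "theta g = ctrans (matrix_inv g)"

definition Jmat :: "('a::sl3_scalar)^3^3" where
  "Jmat = (\<chi> i j. if i = j then (if i = 1 then 1 else -1) else 0)"

definition sigma :: "('a::sl3_scalar)^3^3 \<Rightarrow> 'a^3^3" where
  "sigma g = Jmat ** theta g ** Jmat"

definition Kgrp :: "(('a::sl3_scalar)^3^3) set" where
  "Kgrp = {g \<in> G. theta g = g}"

definition Gsigma :: "(('a::sl3_scalar)^3^3) set" where
  "Gsigma = {g \<in> G. sigma g = g}"

text \<open>Real coordinates of a matrix (identifies F^(3x3) with a Euclidean space)\<close>
definition mcoords :: "('a::sl3_scalar)^3^3 \<Rightarrow> real^4^3^3" where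
  "mcoords g = (\<chi> i j. coords (g $ i $ j))"

definition Hgrp :: "(('a::sl3_scalar)^3^3) set" where
  "Hgrp = {h \<in> Gsigma. mcoords h \<in> connected_component_set (mcoords ` (Gsigma :: (('a^3^3) set))) (mcoords (mat 1 :: 'a^3^3))}"

definition hs2 :: "('a::sl3_scalar)^3^3 \<Rightarrow> real" where
  "hs2 X = (\<Sum>i\<in>UNIV. \<Sum>j\<in>UNIV. absq (X $ i $ j))"

definition Phi :: "('a::sl3_scalar)^3^3 \<Rightarrow> real" where
  "Phi g = hs2 (g ** matrix_inv (sigma g)) * hs2 (sigma g ** matrix_inv g)"

definition Vsp :: "(real^3) set" where
  "Vsp = {t. t $ 1 + t $ 2 + t $ 3 = 0}"

definition a_t :: "real^3 \<Rightarrow> ('a::sl3_scalar)^3^3" where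
  "a_t t = (\<chi> i j. if i = j then of_real (exp (t $ i)) else 0)"

definition KaH :: "real^3 \<Rightarrow> (('a::sl3_scalar)^3^3) set" where
  "KaH t = {k ** a_t t ** h | k h. k \<in> Kgrp \<and> h \<in> Hgrp}"

definition lemma1p9_claim :: "'a::sl3_scalar itself \<Rightarrow> bool" where
  "lemma1p9_claim (_ :: 'a itself) \<longleftrightarrow>
    (\<forall>(g::'a^3^3) t. g \<in> G \<and> t \<in> Vsp \<and> g \<in> KaH t \<longrightarrow>
        Phi g = (\<Sum>i\<in>UNIV. exp (4 * t $ i)) * (\<Sum>i\<in>UNIV. exp (- 4 * t $ i)) \<and>
        (\<Sum>i\<in>UNIV. exp (4 * t $ i)) * (\<Sum>i\<in>UNIV. exp (- 4 * t $ i)) =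
          3 + 2 * cosh (4 * (t $ 1 - t $ 2)) + 2 * cosh (4 * (t $ 1 - t $ 3))
            + 2 * cosh (4 * (t $ 2 - t $ 3))) \<and>
    (\<forall>(k::'a^3^3) g. k \<in> Kgrp \<and> g \<in> G \<longrightarrow> Phi (k ** g) = Phi g) \<and>
    (\<forall>(g::'a^3^3) h. g \<in> G \<and> h \<in> Hgrp \<longrightarrow> Phi (g ** h) = Phi g) \<and>
    (\<forall>(g::'a^3^3). g \<in> G \<longrightarrow> Phi (sigma g) = Phi g) \<and>
    (\<forall>t \<pi>. t \<in> Vsp \<and> \<pi> permutes (UNIV :: 3 set) \<longrightarrow>
        Phi (a_t (\<chi> i. t $ \<pi> i) :: 'a^3^3) = Phi (a_t t :: 'a^3^3))"

end

theory Submission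
  imports Defs
begin



class sl3_good = sl3_scalar +
  assumes cj_add: "cj (a + b) = cj a + cj b"
  and cj_mult: "cj (a * b) = cj b * cj a"
  and cj_cj: "cj (cj a) = a"
  and cj_of_real0: "cj (scaleR r 1) = scaleR r 1"
  and absq_l0: "scaleR ((norm (coords a))\<^sup>2) 1 = cj a * a"
  and absq_r0: "scaleR ((norm (coords a))\<^sup>2) 1 = a * cj a"
  and SL3_inv0: "g \<in> SL3 \<Longrightarrow> \<exists>h. (\<chi> i j. \<Sum>k\<in>UNIV. g$i$k * h$k$j) = (\<chi> i j. if i = j then 1 else 0)
      \<and> (\<chi> i j. \<Sum>k\<in>UNIV. h$i$k * g$k$j) = (\<chi> i j. if i = j then 1 else 0)"

lemma absq_l: "of_real (absq a) = cj a * (a::'a::sl3_good)" unfolding absq_def of_real_def using absq_l0 .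
lemma absq_r: "of_real (absq a) = a * cj (a::'a::sl3_good)" unfolding absq_def of_real_def using absq_r0 .
lemma cj_of_real: "cj (of_real r :: 'a::sl3_good) = of_real r" unfolding of_real_def using cj_of_real0 .
lemma SL3_inv: "(g::'a::sl3_good^3^3) \<in> SL3 \<Longrightarrow> invertible g"
  using SL3_inv0[of g] unfolding invertible_def matrix_matrix_mult_def mat_def by auto
lemma cj_0[simp]: "cj (0::'a::sl3_good) = 0" using cj_of_real[of 0, where 'a='a] by simp
lemma cj_1[simp]: "cj (1::'a::sl3_good) = 1" using cj_of_real[of 1, where 'a='a] by simp
lemma cj_neg: "cj (- a) = - cj (a::'a::sl3_good)"
  using cj_add[of a "-a"] by (simp add: eq_neg_iff_add_eq_0 add.commute)
lemma cj_sum: "cj (sum f S) = sum (\<lambda>x. cj (f x)) S" for f :: "_ \<Rightarrow> 'a::sl3_good"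
  by (induction S rule: infinite_finite_induct) (simp_all add: cj_add)


lemma ctrans_mul: "ctrans (A ** B) = ctrans B ** ctrans (A::'a::sl3_good^3^3)"
  by (simp add: ctrans_def matrix_matrix_mult_def vec_eq_iff cj_sum cj_mult)
lemma ctrans_ctrans[simp]: "ctrans (ctrans A) = (A::'a::sl3_good^3^3)"
  by (simp add: ctrans_def vec_eq_iff cj_cj)
lemma ctrans_mat1[simp]: "ctrans (mat 1) = (mat 1::'a::sl3_good^3^3)"
  by (simp add: ctrans_def vec_eq_iff mat_def)

lemma minv: "invertible (A::'a::sl3_good^3^3) \<Longrightarrow> A ** matrix_inv A = mat 1 \<and> matrix_inv A ** A = mat 1"
  unfolding invertible_def matrix_inv_def by (rule someI_ex)
lemma inv_eq: assumes "A ** B = mat 1" "B ** A = mat 1" shows "matrix_inv (A::'a::sl3_good^3^3) = B"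
proof -
  have i: "invertible A" using assms unfolding invertible_def by blast
  have "matrix_inv A = (B ** A) ** matrix_inv A" using assms by simp
  also have "\<dots> = B ** (A ** matrix_inv A)" by (simp only: matrix_mul_assoc)
  also have "\<dots> = B" using minv[OF i] by simp
  finally show ?thesis .
qed
lemma invI: "A ** B = mat 1 \<Longrightarrow> B ** A = mat 1 \<Longrightarrow> invertible (A::'a::sl3_good^3^3)"
  unfolding invertible_def by blast

lemma inv_mul: assumes "invertible (A::'a::sl3_good^3^3)" "invertible (B::'a::sl3_good^3^3)"
  shows "invertible (A ** B) \<and> matrix_inv (A ** B) = matrix_inv B ** matrix_inv A"
proof -
  have 1: "(A ** B) ** (matrix_inv B ** matrix_inv A) = mat 1"
  proof -
    have "(A ** B) ** (matrix_inv B ** matrix_inv A) = A ** ((B ** matrix_inv B) ** matrix_inv A)"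
      by (simp only: matrix_mul_assoc)
    then show ?thesis using minv[OF assms(1)] minv[OF assms(2)] by simp
  qed
  have 2: "(matrix_inv B ** matrix_inv A) ** (A ** B) = mat 1"
  proof -
    have "(matrix_inv B ** matrix_inv A) ** (A ** B) = matrix_inv B ** ((matrix_inv A ** A) ** B)"
      by (simp only: matrix_mul_assoc)
    then show ?thesis using minv[OF assms(1)] minv[OF assms(2)] by simp
  qed
  show ?thesis using invI[OF 1 2] inv_eq[OF 1 2] by blast
qed
lemma ctrans_inv: assumes "invertible (A::'a::sl3_good^3^3)"
  shows "invertible (ctrans A) \<and> matrix_inv (ctrans A) = ctrans (matrix_inv A)"
proof -
  have 1: "ctrans A ** ctrans (matrix_inv A) = mat 1" using minv[OF assms]
    by (metis ctrans_mul ctrans_mat1)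
  have 2: "ctrans (matrix_inv A) ** ctrans A = mat 1" using minv[OF assms]
    by (metis ctrans_mul ctrans_mat1)
  show ?thesis using invI[OF 1 2] inv_eq[OF 1 2] by blast
qed
lemma inv_inv: assumes "invertible (A::'a::sl3_good^3^3)"
  shows "invertible (matrix_inv A) \<and> matrix_inv (matrix_inv A) = A"
  using minv[OF assms] invI inv_eq by blast


definition dg :: "(3 \<Rightarrow> real) \<Rightarrow> 'a::sl3_good^3^3" where
  "dg d = (\<chi> i j. if i = j then of_real (d i) else 0)"
lemma sum_delta_l: "(\<Sum>k\<in>UNIV. (if (i::'n::finite) = k then x else 0) * f k) = x * (f i :: 'a::semiring_1)"
proof -
  have "(\<Sum>k\<in>UNIV. (if i = k then x else 0) * f k) = (\<Sum>k\<in>UNIV. if i = k then x * f k else 0)"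
    by (rule sum.cong) auto
  then show ?thesis by (simp add: sum.delta')
qed
lemma dg_mul: "dg d ** dg e = (dg (\<lambda>i. d i * e i) :: 'a::sl3_good^3^3)"
  unfolding dg_def matrix_matrix_mult_def
  by (simp add: vec_eq_iff sum_delta_l)

lemma dg_1: "dg (\<lambda>i. 1) = (mat 1 :: 'a::sl3_good^3^3)"
  by (simp add: vec_eq_iff dg_def mat_def)
lemma J_dg: "Jmat = (dg (\<lambda>i. if i = 1 then 1 else -1) :: 'a::sl3_good^3^3)"
  unfolding dg_def Jmat_def by (simp add: vec_eq_iff)
lemma J_J: "Jmat ** Jmat = (mat 1 :: 'a::sl3_good^3^3)"
  unfolding J_dg dg_mul dg_1[symmetric] by (rule arg_cong[where f=dg]) auto
lemma J_inv: "invertible (Jmat :: 'a::sl3_good^3^3) \<and> matrix_inv (Jmat :: 'a::sl3_good^3^3) = Jmat"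
  using invI[OF J_J J_J] inv_eq[OF J_J J_J] by blast
lemma ctrans_dg: "ctrans (dg d) = (dg d :: 'a::sl3_good^3^3)"
  by (simp add: dg_def ctrans_def vec_eq_iff cj_of_real)
lemma ctrans_J: "ctrans Jmat = (Jmat :: 'a::sl3_good^3^3)"
  unfolding J_dg by (rule ctrans_dg)

lemma theta_inv: "invertible (A::'a::sl3_good^3^3) \<Longrightarrow> invertible (theta A)"
  unfolding theta_def using inv_inv ctrans_inv by blast
lemma sigma_inv: "invertible (A::'a::sl3_good^3^3) \<Longrightarrow> invertible (sigma A)"
  unfolding sigma_def using theta_inv inv_mul J_inv by blast
lemma theta_mul: "invertible (A::'a::sl3_good^3^3) \<Longrightarrow> invertible B \<Longrightarrow> theta (A ** B) = theta A ** theta B"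
  unfolding theta_def by (simp add: inv_mul ctrans_mul)
lemma sigma_mul: assumes "invertible (A::'a::sl3_good^3^3)" "invertible B"
  shows "sigma (A ** B) = sigma A ** sigma B"
proof -
  have "sigma A ** sigma B = Jmat ** theta A ** (Jmat ** Jmat) ** theta B ** Jmat"
    unfolding sigma_def by (simp only: matrix_mul_assoc)
  also have "\<dots> = sigma (A ** B)" unfolding sigma_def J_J theta_mul[OF assms]
    by (simp only: matrix_mul_assoc matrix_mul_rid)
  finally show ?thesis by simp
qed
lemma theta_theta: "invertible (A::'a::sl3_good^3^3) \<Longrightarrow> theta (theta A) = A"
  unfolding theta_def by (simp add: inv_inv ctrans_inv)
lemma sigma_sigma: assumes "invertible (A::'a::sl3_good^3^3)" shows "sigma (sigma A) = A"
proof -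
  have tJ: "theta Jmat = (Jmat :: 'a^3^3)" unfolding theta_def using J_inv ctrans_J by metis
  have i1: "invertible (Jmat ** theta A)" using J_inv theta_inv[OF assms] inv_mul by blast
  have "theta (sigma A) = theta Jmat ** theta (theta A) ** theta Jmat"
    unfolding sigma_def using theta_mul[OF i1 conjunct1[OF J_inv]] theta_mul[OF conjunct1[OF J_inv] theta_inv[OF assms]]
    by simp
  then have "sigma (sigma A) = Jmat ** (Jmat ** A ** Jmat) ** Jmat"
    unfolding tJ theta_theta[OF assms] by (simp add: sigma_def)
  also have "\<dots> = (Jmat ** Jmat) ** A ** (Jmat ** Jmat)" by (simp only: matrix_mul_assoc)
  also have "\<dots> = A" unfolding J_J by simp
  finally show ?thesis .
qed

definition tr :: "'a::sl3_good^3^3 \<Rightarrow> 'a" where "tr M = (\<Sum>i\<in>UNIV. M$i$i)"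
lemma hs2_tl: "of_real (hs2 X) = tr (ctrans X ** (X::'a::sl3_good^3^3))"
proof -
  have "tr (ctrans X ** X) = (\<Sum>j\<in>UNIV. \<Sum>i\<in>UNIV. cj (X$i$j) * X$i$j)"
    by (simp add: tr_def ctrans_def matrix_matrix_mult_def)
  also have "\<dots> = (\<Sum>i\<in>UNIV. \<Sum>j\<in>UNIV. cj (X$i$j) * X$i$j)" by (rule sum.swap)
  finally show ?thesis unfolding hs2_def of_real_sum absq_l by simp
qed
lemma hs2_tr: "of_real (hs2 X) = tr (X ** ctrans (X::'a::sl3_good^3^3))"
  unfolding hs2_def tr_def of_real_sum absq_r
  by (simp add: ctrans_def matrix_matrix_mult_def)
lemma hs2_left: assumes "ctrans U ** U = mat 1" shows "hs2 (U ** X) = hs2 (X::'a::sl3_good^3^3)"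
proof -
  have "ctrans (U ** X) ** (U ** X) = ctrans X ** (ctrans U ** U) ** X"
    by (simp only: ctrans_mul matrix_mul_assoc)
  then have "of_real (hs2 (U ** X)) = (of_real (hs2 X) :: 'a)"
    unfolding hs2_tl assms by simp
  then show ?thesis by simp
qed
lemma hs2_right: assumes "U ** ctrans U = mat 1" shows "hs2 (X ** U) = hs2 (X::'a::sl3_good^3^3)"
proof -
  have "(X ** U) ** ctrans (X ** U) = X ** (U ** ctrans U) ** ctrans X"
    by (simp only: ctrans_mul matrix_mul_assoc)
  then have "of_real (hs2 (X ** U)) = (of_real (hs2 X) :: 'a)"
    unfolding hs2_tr assms by simp
  then show ?thesis by simp
qed

lemma K_props: assumes "k \<in> (Kgrp :: ('a::sl3_good^3^3) set)"
  shows "invertible k \<and> matrix_inv k = ctrans k \<and> sigma k = Jmat ** k ** Jmat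
    \<and> ctrans k ** k = mat 1 \<and> k ** ctrans k = mat 1"
proof -
  have k: "k \<in> SL3" "theta k = k" using assms unfolding Kgrp_def by auto
  have i: "invertible k" using SL3_inv k(1) by blast
  have "matrix_inv k = ctrans k" using k(2) unfolding theta_def by (metis ctrans_ctrans)
  then show ?thesis using i minv[OF i] k(2) unfolding sigma_def by simp
qed

lemma Phi_K: assumes k: "k \<in> (Kgrp :: ('a::sl3_good^3^3) set)" and g: "invertible g"
  shows "Phi (k ** g) = Phi g"
proof -
  note kp = K_props[OF k]
  have ik: "invertible k" using kp by blast
  have sk: "sigma (k ** g) = Jmat ** k ** Jmat ** sigma g"
    using sigma_mul[OF ik g] kp by simp
  have isk: "matrix_inv (Jmat ** k ** Jmat) = Jmat ** ctrans k ** Jmat"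
  proof (rule inv_eq)
    have u1: "k ** ctrans k = mat 1" "ctrans k ** k = mat 1" using kp by blast+
    have "Jmat ** k ** Jmat ** (Jmat ** ctrans k ** Jmat) = Jmat ** (k ** (Jmat ** Jmat) ** ctrans k) ** Jmat"
      by (simp only: matrix_mul_assoc)
    also have "\<dots> = Jmat ** Jmat" by (simp only: J_J matrix_mul_rid u1)
    finally show "Jmat ** k ** Jmat ** (Jmat ** ctrans k ** Jmat) = mat 1" by (simp only: J_J)
    have "Jmat ** ctrans k ** Jmat ** (Jmat ** k ** Jmat) = Jmat ** (ctrans k ** (Jmat ** Jmat) ** k) ** Jmat"
      by (simp only: matrix_mul_assoc)
    also have "\<dots> = Jmat ** Jmat" by (simp only: J_J matrix_mul_rid u1)
    finally show "Jmat ** ctrans k ** Jmat ** (Jmat ** k ** Jmat) = mat 1" by (simp only: J_J)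
  qed
  have iJk: "invertible (Jmat ** k ** Jmat)" using J_inv ik inv_mul by blast
  have isg: "invertible (sigma g)" using sigma_inv[OF g] .
  have 1: "(k ** g) ** matrix_inv (sigma (k ** g)) = (k ** (g ** matrix_inv (sigma g)) ** Jmat ** ctrans k) ** Jmat"
    unfolding sk using inv_mul[OF iJk isg] isk by (simp only: matrix_mul_assoc)
  have 2: "sigma (k ** g) ** matrix_inv (k ** g) = (Jmat ** (k ** (Jmat ** (sigma g ** matrix_inv g)))) ** ctrans k"
    unfolding sk using inv_mul[OF ik g] kp by (simp only: matrix_mul_assoc)
  have uJ: "Jmat ** ctrans Jmat = (mat 1 :: 'a^3^3)" "ctrans Jmat ** Jmat = (mat 1 :: 'a^3^3)"
    by (simp_all add: J_J ctrans_J)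
  have uk: "ctrans k ** ctrans (ctrans k) = mat 1" using kp by simp
  have a: "hs2 ((k ** g) ** matrix_inv (sigma (k ** g))) = hs2 (g ** matrix_inv (sigma g))"
    unfolding 1 hs2_right[OF uJ(1)] hs2_right[OF uk] hs2_left[OF conjunct1[OF conjunct2[OF conjunct2[OF conjunct2[OF kp]]]]] ..
  have b: "hs2 (sigma (k ** g) ** matrix_inv (k ** g)) = hs2 (sigma g ** matrix_inv g)"
    unfolding 2 hs2_right[OF uk] hs2_left[OF uJ(2)] hs2_left[OF conjunct1[OF conjunct2[OF conjunct2[OF conjunct2[OF kp]]]]] ..
  show ?thesis unfolding Phi_def a b ..
qed

lemma Phi_H: assumes g: "invertible (g :: 'a::sl3_good^3^3)" and h: "h \<in> Hgrp"
  shows "Phi (g ** h) = Phi g"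
proof -
  have h1: "h \<in> SL3" "sigma h = h" using h unfolding Hgrp_def Gsigma_def by auto
  have ih: "invertible h" using SL3_inv h1(1) by blast
  have s: "sigma (g ** h) = sigma g ** h" using sigma_mul[OF g ih] h1 by simp
  have 1: "(g ** h) ** matrix_inv (sigma (g ** h)) = g ** matrix_inv (sigma g)"
  proof -
    have "(g ** h) ** matrix_inv (sigma (g ** h)) = g ** (h ** matrix_inv h) ** matrix_inv (sigma g)"
      unfolding s using inv_mul[OF sigma_inv[OF g] ih] by (simp only: matrix_mul_assoc)
    then show ?thesis using minv[OF ih] by simp
  qed
  have 2: "sigma (g ** h) ** matrix_inv (g ** h) = sigma g ** matrix_inv g"
  proof -
    have "sigma (g ** h) ** matrix_inv (g ** h) = sigma g ** (h ** matrix_inv h) ** matrix_inv g"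
      unfolding s using inv_mul[OF g ih] by (simp only: matrix_mul_assoc)
    then show ?thesis using minv[OF ih] by simp
  qed
  show ?thesis unfolding Phi_def 1 2 ..
qed

lemma Phi_sigma: assumes g: "invertible (g :: 'a::sl3_good^3^3)" shows "Phi (sigma g) = Phi g"
  unfolding Phi_def sigma_sigma[OF g] by simp

lemma absq_of_real: "absq (of_real r :: 'a::sl3_good) = r^2"
proof -
  have "(of_real (absq (of_real r :: 'a)) :: 'a) = of_real (r^2)"
    unfolding absq_l cj_of_real by (simp add: power2_eq_square)
  then show ?thesis by (simp only: of_real_eq_iff)
qed
lemma absq_0: "absq (0 :: 'a::sl3_good) = 0"
  using absq_of_real[of 0, where 'a='a] by simp
lemma hs2_dg: "hs2 (dg d :: 'a::sl3_good^3^3) = (\<Sum>i\<in>UNIV. (d i)^2)"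
proof -
  have "hs2 (dg d :: 'a::sl3_good^3^3) = (\<Sum>i\<in>UNIV. \<Sum>j\<in>UNIV. if i = j then (d i)^2 else 0)"
    unfolding hs2_def dg_def by (rule sum.cong[OF refl], rule sum.cong[OF refl]) (simp add: absq_of_real absq_0)
  then show ?thesis by simp
qed
lemma dg_inv: assumes "\<forall>i. d i \<noteq> 0"
  shows "invertible (dg d :: 'a::sl3_good^3^3) \<and> matrix_inv (dg d :: 'a::sl3_good^3^3) = dg (\<lambda>i. 1 / d i)"
proof -
  have 1: "dg d ** dg (\<lambda>i. 1 / d i) = (mat 1 :: 'a^3^3)"
    unfolding dg_mul dg_1[symmetric] using assms by (intro arg_cong[where f=dg]) auto
  have 2: "dg (\<lambda>i. 1 / d i) ** dg d = (mat 1 :: 'a^3^3)"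
    unfolding dg_mul dg_1[symmetric] using assms by (intro arg_cong[where f=dg]) auto
  show ?thesis using invI[OF 1 2] inv_eq[OF 1 2] by blast
qed
lemma sigma_dg: assumes "\<forall>i. d i \<noteq> 0"
  shows "sigma (dg d :: 'a::sl3_good^3^3) = dg (\<lambda>i. 1 / d i)"
  unfolding sigma_def theta_def conjunct2[OF dg_inv[OF assms]] ctrans_dg J_dg dg_mul
  by (intro arg_cong[where f=dg]) auto
lemma Phi_dg: assumes "\<forall>i. d i \<noteq> 0"
  shows "Phi (dg d :: 'a::sl3_good^3^3) = (\<Sum>i\<in>UNIV. (d i * d i)^2) * (\<Sum>i\<in>UNIV. (1 / d i * (1 / d i))^2)"
proof -
  have a: "\<forall>i. 1 / d i \<noteq> 0" using assms by simp
  show ?thesis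
    unfolding Phi_def sigma_dg[OF assms] conjunct2[OF dg_inv[OF a]] conjunct2[OF dg_inv[OF assms]] dg_mul hs2_dg
    using assms by simp
qed
lemma a_t_dg: "a_t t = dg (\<lambda>i. exp (t$i))"
  unfolding a_t_def dg_def ..
lemma Phi_a: "Phi (a_t t :: 'a::sl3_good^3^3) = (\<Sum>i\<in>UNIV. exp (4 * t $ i)) * (\<Sum>i\<in>UNIV. exp (- 4 * t $ i))"
proof -
  have e: "(exp x * exp x)^2 = exp (4 * x)" "(1 / exp x * (1 / exp x))^2 = exp (- 4 * x)" for x :: real
  proof -
    have p: "exp (4*x) = exp x ^ 4" using exp_of_nat_mult[of 4 x] by simp
    show "(exp x * exp x)^2 = exp (4 * x)" unfolding p by algebra
    have q: "exp (- 4 * x) = 1 / exp x ^ 4" using exp_minus[of "4*x"] p by (simp add: inverse_eq_divide)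
    show "(1 / exp x * (1 / exp x))^2 = exp (- 4 * x)" unfolding q by (simp add: field_simps eval_nat_numeral)
  qed
  have nz: "\<forall>i. exp (t$i) \<noteq> 0" by simp
  show ?thesis unfolding a_t_dg Phi_dg[OF nz] e ..
qed
lemma aux: "a1*b1 = 1 \<Longrightarrow> a2*b2=1 \<Longrightarrow> a3*b3=1 \<Longrightarrow> (a1+a2+a3)*(b1+b2+b3) = 3 + 2*((a1*b2+a2*b1)/2) + 2*((a1*b3+a3*b1)/2) + 2*((a2*b3+a3*b2)/2)"
  for a1 a2 a3 b1 b2 b3 :: real
  by (simp add: algebra_simps add_divide_distrib)
lemma cosh_id: "(\<Sum>i\<in>UNIV. exp (4 * t $ i)) * (\<Sum>i\<in>UNIV. exp (- 4 * t $ i)) =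
          3 + 2 * cosh (4 * (t $ 1 - t $ 2)) + 2 * cosh (4 * (t $ 1 - t $ 3))
            + 2 * cosh (4 * (t $ 2 - t $ 3))" for t :: "real^3"
proof -
  have c: "cosh (4*(x-y)) = (exp (4*x) * exp (-4*y) + exp (4*y) * exp (-4*x))/2" for x y :: real
    by (simp add: cosh_def algebra_simps flip: exp_add)
  have ab: "exp (4*x) * exp (-4*x) = 1" for x :: real by (simp flip: exp_add)
  show ?thesis unfolding sum_3 c
    by (rule aux[OF ab ab ab])
qed
lemma weyl: assumes "\<pi> permutes (UNIV :: 3 set)"
  shows "Phi (a_t (\<chi> i. t $ \<pi> i) :: 'a::sl3_good^3^3) = Phi (a_t t :: 'a::sl3_good^3^3)"
  unfolding Phi_a using sum.permute[OF assms, of "\<lambda>i. exp (4 * t $ i)"] sum.permute[OF assms, of "\<lambda>i. exp (- 4 * t $ i)"]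
  by (simp add: comp_def)

lemma two_cases: "(a::2) = 0 \<or> a = 1" using exhaust_2[of a] by auto
lemma UNIV2: "(UNIV::2 set) = {0,1}" using two_cases by auto
lemma sum2: "(\<Sum>c\<in>UNIV. f c) = f (0::2) + f 1" unfolding UNIV2 by simp
lemma sum32: "(\<Sum>p\<in>(UNIV::(3\<times>2) set). f p) = (\<Sum>l\<in>UNIV. \<Sum>c\<in>UNIV. f (l,c))"
  unfolding UNIV_Times_UNIV[symmetric] sum.cartesian_product by simp

definition jb :: "2 \<Rightarrow> 2 \<Rightarrow> complex" where
  "jb a b = (if a = 0 \<and> b = 1 then 1 else if a = 1 \<and> b = 0 then -1 else 0)"
definition Em :: "complex^(3\<times>2)^(3\<times>2)" where
  "Em = (\<chi> p q. if fst p = fst q then jb (snd p) (snd q) else 0)"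
definition Em' :: "complex^(3\<times>2)^(3\<times>2)" where
  "Em' = (\<chi> p q. if fst p = fst q then jb (snd q) (snd p) else 0)"
definition cconj :: "complex^(3\<times>2)^(3\<times>2) \<Rightarrow> complex^(3\<times>2)^(3\<times>2)" where
  "cconj X = (\<chi> p q. cnj (X$p$q))"
definition Tm :: "complex^(3\<times>2)^(3\<times>2) \<Rightarrow> complex^(3\<times>2)^(3\<times>2)" where
  "Tm X = Em ** cconj X ** Em'"

lemma sum_delta3_l: "(\<Sum>l\<in>UNIV. \<Sum>c\<in>UNIV. (if i = l then f c else 0) * g l c) = (\<Sum>c\<in>UNIV. f c * g i c)"
  for i :: 3 and f :: "2 \<Rightarrow> complex" and g
proof -
  have "(\<Sum>l\<in>UNIV. \<Sum>c\<in>UNIV. (if i = l then f c else 0) * g l c) = (\<Sum>l\<in>UNIV. if i = l then (\<Sum>c\<in>UNIV. f c * g l c) else 0)"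
    by (rule sum.cong) auto
  then show ?thesis by (simp add: sum.delta)
qed
lemma sum_delta3_r: "(\<Sum>l\<in>UNIV. \<Sum>c\<in>UNIV. g l c * (if l = j then f c else 0)) = (\<Sum>c\<in>UNIV. g j c * f c)"
  for j :: 3 and f :: "2 \<Rightarrow> complex" and g
proof -
  have "(\<Sum>l\<in>UNIV. \<Sum>c\<in>UNIV. g l c * (if l = j then f c else 0)) = (\<Sum>l\<in>UNIV. if l = j then (\<Sum>c\<in>UNIV. g l c * f c) else 0)"
    by (rule sum.cong) auto
  then show ?thesis by (simp add: sum.delta')
qed

lemma Em_mul: "(Em ** X) $ (i,a) $ q = (\<Sum>c\<in>UNIV. jb a c * X $ (i, c) $ q)"
  unfolding matrix_matrix_mult_def Em_def vec_lambda_beta sum32 snd_conv fst_conv by (rule sum_delta3_l)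
lemma mul_Em': "(X ** Em') $ p $ (j,b) = (\<Sum>c\<in>UNIV. X $ p $ (j, c) * jb b c)"
  unfolding matrix_matrix_mult_def Em'_def vec_lambda_beta sum32 snd_conv fst_conv by (rule sum_delta3_r)
lemma Em'_mul: "(Em' ** X) $ (i,a) $ q = (\<Sum>c\<in>UNIV. jb c a * X $ (i, c) $ q)"
  unfolding matrix_matrix_mult_def Em'_def vec_lambda_beta sum32 snd_conv fst_conv by (rule sum_delta3_l)
lemma mul_Em: "(X ** Em) $ p $ (j,b) = (\<Sum>c\<in>UNIV. X $ p $ (j, c) * jb c b)"
  unfolding matrix_matrix_mult_def Em_def vec_lambda_beta sum32 snd_conv fst_conv by (rule sum_delta3_r)

lemma Em_Em': "Em ** Em' = mat 1"
proof -
  have "(Em ** Em') $ (i,a) $ (j,b) = mat 1 $ (i,a) $ (j,b)" for i j a b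
    unfolding Em_mul sum2 using two_cases[of a] two_cases[of b]
    by (auto simp: Em'_def mat_def jb_def)
  then show ?thesis by (simp add: vec_eq_iff)
qed
lemma Em'_Em: "Em' ** Em = mat 1"
proof -
  have "(Em' ** Em) $ (i,a) $ (j,b) = mat 1 $ (i,a) $ (j,b)" for i j a b
    unfolding Em'_mul sum2 using two_cases[of a] two_cases[of b]
    by (auto simp: Em_def mat_def jb_def)
  then show ?thesis by (simp add: vec_eq_iff)
qed
lemma cconj_mul: "cconj (X ** Y) = cconj X ** cconj Y"
  by (simp add: cconj_def matrix_matrix_mult_def vec_eq_iff)
lemma cconj_1: "cconj (mat 1) = mat 1"
  by (simp add: cconj_def mat_def vec_eq_iff)
lemma Tm_mul: "Tm (X ** Y) = Tm X ** Tm Y"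
proof -
  have "Tm X ** Tm Y = Em ** cconj X ** (Em' ** Em) ** cconj Y ** Em'"
    unfolding Tm_def by (simp only: matrix_mul_assoc)
  then show ?thesis unfolding Em'_Em Tm_def cconj_mul by (simp add: matrix_mul_assoc)
qed
lemma Tm_1: "Tm (mat 1) = mat 1"
  unfolding Tm_def cconj_1 by (simp add: Em_Em')
lemma Tm_entry: "Tm X $ (i,a) $ (j,b) = (\<Sum>c\<in>UNIV. \<Sum>d\<in>UNIV. jb a d * cnj (X $ (i,d) $ (j,c)) * jb b c)"
  unfolding Tm_def mul_Em' Em_mul cconj_def by (simp add: sum_distrib_right)

lemma qb: "quat_block q 0 0 = Complex (qRe q) (qI q)" "quat_block q 0 1 = Complex (qJ q) (qK q)"
  "quat_block q 1 0 = - cnj (Complex (qJ q) (qK q))" "quat_block q 1 1 = cnj (Complex (qRe q) (qI q))"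
  unfolding quat_block_def Let_def by simp_all
lemma qb_cases: "P (quat_block q a b)" if "P (quat_block q 0 0)" "P (quat_block q 0 1)"
  "P (quat_block q 1 0)" "P (quat_block q 1 1)"
  using two_cases[of a] two_cases[of b] that by auto
lemma block_add: "quat_block (p + q) a b = quat_block p a b + quat_block q a b"
  using two_cases[of a] two_cases[of b] by (elim disjE) (simp_all add: qb plus_quat_def complex_eq_iff)
lemma block_0: "quat_block 0 a b = 0"
  using two_cases[of a] two_cases[of b] by (elim disjE) (simp_all add: qb zero_quat_def complex_eq_iff)
lemma block_1: "quat_block 1 a b = (if a = b then 1 else 0)"
  using two_cases[of a] two_cases[of b] by (elim disjE) (simp_all add: qb one_quat_def complex_eq_iff)
lemma block_sum: "quat_block (sum f S) a b = (\<Sum>x\<in>S. quat_block (f x) a b)"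
  by (induction S rule: infinite_finite_induct) (simp_all add: block_add block_0)
lemma block_mul: "(\<Sum>c\<in>UNIV. quat_block p a c * quat_block q c b) = quat_block (p * q) a b"
  unfolding sum2
  using two_cases[of a] two_cases[of b] by (elim disjE) (simp_all add: qb times_quat_def complex_eq_iff algebra_simps)
lemma cmat_mul: "quat_cmat (A ** B) = quat_cmat A ** quat_cmat B"
proof -
  have "(quat_cmat A ** quat_cmat B) $ (i,a) $ (j,b) = quat_cmat (A ** B) $ (i,a) $ (j,b)" for i a j b
    unfolding matrix_matrix_mult_def quat_cmat_def vec_lambda_beta sum32 fst_conv snd_conv block_mul block_sum ..
  then show ?thesis by (simp add: vec_eq_iff)
qed
lemma cmat_one: "quat_cmat (mat 1) = mat 1"
  by (auto simp: quat_cmat_def mat_def vec_eq_iff block_1 block_0)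
lemma cmat_inj: assumes "quat_cmat A = quat_cmat B" shows "A = B"
proof -
  have "A $ i $ j = B $ i $ j" for i j
  proof -
    have "quat_cmat A $ (i,0) $ (j,0) = quat_cmat B $ (i,0) $ (j,0)" "quat_cmat A $ (i,0) $ (j,1) = quat_cmat B $ (i,0) $ (j,1)"
      using assms by simp_all
    then have "quat_block (A$i$j) 0 0 = quat_block (B$i$j) 0 0" "quat_block (A$i$j) 0 1 = quat_block (B$i$j) 0 1"
      unfolding quat_cmat_def vec_lambda_beta fst_conv snd_conv by simp_all
    then show ?thesis unfolding qb by (simp add: quat_eq_iff)
  qed
  then show ?thesis by (simp add: vec_eq_iff)
qed
lemma Tm_cmat: "Tm (quat_cmat g) = quat_cmat g"
proof -
  have "Tm (quat_cmat g) $ (i,a) $ (j,b) = quat_cmat g $ (i,a) $ (j,b)" for i a j b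
    unfolding Tm_entry quat_cmat_def vec_lambda_beta fst_conv snd_conv sum2
    using two_cases[of a] two_cases[of b] by (elim disjE) (simp_all add: qb jb_def)
  then show ?thesis by (simp add: vec_eq_iff)
qed
definition qmat :: "complex^(3\<times>2)^(3\<times>2) \<Rightarrow> quat^3^3" where
  "qmat N = (\<chi> i j. Quat (Re (N$(i,0)$(j,0))) (Im (N$(i,0)$(j,0))) (Re (N$(i,0)$(j,1))) (Im (N$(i,0)$(j,1))))"
lemma Tm_fix: assumes "Tm N = N" shows "quat_cmat (qmat N) = N"
proof -
  have e: "N $ (i,a) $ (j,b) = (\<Sum>c\<in>UNIV. \<Sum>d\<in>UNIV. jb a d * cnj (N $ (i,d) $ (j,c)) * jb b c)" for i a j b
    using assms Tm_entry by metis
  have "quat_cmat (qmat N) $ (i,a) $ (j,b) = N $ (i,a) $ (j,b)" for i a j b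
  proof -
    have e11: "N $ (i,1) $ (j,1) = cnj (N $ (i,0) $ (j,0))" using e[of i 1 j 1] by (simp add: sum2 jb_def)
    have e10: "N $ (i,1) $ (j,0) = - cnj (N $ (i,0) $ (j,1))" using e[of i 1 j 0] by (simp add: sum2 jb_def)
    show ?thesis unfolding quat_cmat_def qmat_def vec_lambda_beta fst_conv snd_conv
      using two_cases[of a] two_cases[of b] by (elim disjE) (simp_all add: qb complex_eq_iff e11 e10)
  qed
  then show ?thesis by (simp add: vec_eq_iff)
qed

lemma a_inv: "invertible (a_t t :: 'a::sl3_good^3^3)"
  unfolding a_t_dg using dg_inv[of "\<lambda>i. exp (t$i)", where 'a='a] by simp
lemma claim_generic: "lemma1p9_claim TYPE('a::sl3_good)"
  unfolding lemma1p9_claim_def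
proof (intro conjI allI impI)
  fix g :: "'a^3^3" and t
  assume a: "g \<in> G \<and> t \<in> Vsp \<and> g \<in> KaH t"
  then obtain k h where kh: "g = k ** a_t t ** h" "k \<in> Kgrp" "h \<in> Hgrp" unfolding KaH_def by blast
  have ik: "invertible k" using kh(2) K_props by blast
  have "Phi g = Phi (k ** a_t t)" unfolding kh(1)
    by (rule Phi_H[OF _ kh(3)]) (use inv_mul[OF ik a_inv] in blast)
  also have "\<dots> = Phi (a_t t :: 'a^3^3)" by (rule Phi_K[OF kh(2) a_inv])
  finally show "Phi g = (\<Sum>i\<in>UNIV. exp (4 * t $ i)) * (\<Sum>i\<in>UNIV. exp (- 4 * t $ i))"
    by (simp add: Phi_a)
  show "(\<Sum>i\<in>UNIV. exp (4 * t $ i)) * (\<Sum>i\<in>UNIV. exp (- 4 * t $ i)) =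
          3 + 2 * cosh (4 * (t $ 1 - t $ 2)) + 2 * cosh (4 * (t $ 1 - t $ 3))
            + 2 * cosh (4 * (t $ 2 - t $ 3))" by (rule cosh_id)
next
  fix k g :: "'a^3^3" assume "k \<in> Kgrp \<and> g \<in> G"
  then show "Phi (k ** g) = Phi g" using Phi_K SL3_inv by blast
next
  fix g h :: "'a^3^3" assume "g \<in> G \<and> h \<in> Hgrp"
  then show "Phi (g ** h) = Phi g" using Phi_H SL3_inv by blast
next
  fix g :: "'a^3^3" assume "g \<in> G"
  then show "Phi (sigma g) = Phi g" using Phi_sigma SL3_inv by blast
next
  fix t :: "real^3" and \<pi> :: "3 \<Rightarrow> 3" assume "t \<in> Vsp \<and> \<pi> permutes UNIV"
  then show "Phi (a_t (\<chi> i. t $ \<pi> i) :: 'a^3^3) = Phi (a_t t :: 'a^3^3)" using weyl by blast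
qed

lemma vec4: "(vector [a,b,c,d] :: real^4) $ 1 = a" "(vector [a,b,c,d] :: real^4) $ 2 = b"
  "(vector [a,b,c,d] :: real^4) $ 3 = c" "(vector [a,b,c,d] :: real^4) $ 4 = d"
  unfolding vector_def by simp_all
lemma norm4: "(norm (vector [a,b,c,d] :: real^4))\<^sup>2 = a^2+b^2+c^2+d^2"
  unfolding power2_norm_eq_inner inner_vec_def sum_4 by (simp add: vec4 power2_eq_square)

lemma field_SL3_inv: "det (g::'a::field^3^3) = 1 \<Longrightarrow> \<exists>h. (\<chi> i j. \<Sum>k\<in>UNIV. g$i$k * h$k$j) = (\<chi> i j. if i = j then 1 else 0)
      \<and> (\<chi> i j. \<Sum>k\<in>UNIV. h$i$k * g$k$j) = (\<chi> i j. if i = j then 1 else 0)"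
  using invertible_det_nz[of g] unfolding invertible_def matrix_matrix_mult_def mat_def by auto

instance real :: sl3_good
proof
  fix a b :: real and r :: real and g :: "real^3^3"
  show "cj (a + b) = cj a + cj b" "cj (a * b) = cj b * cj a" "cj (cj a) = a"
    "cj (r *\<^sub>R (1::real)) = r *\<^sub>R 1" by (simp_all add: cj_real_def)
  show "(norm (coords a))\<^sup>2 *\<^sub>R (1::real) = cj a * a" "(norm (coords a))\<^sup>2 *\<^sub>R (1::real) = a * cj a"
    unfolding cj_real_def coords_real_def norm4 by (simp_all add: power2_eq_square)
  show "g \<in> SL3 \<Longrightarrow> \<exists>h. (\<chi> i j. \<Sum>k\<in>UNIV. g$i$k * h$k$j) = (\<chi> i j. if i = j then 1 else 0)
      \<and> (\<chi> i j. \<Sum>k\<in>UNIV. h$i$k * g$k$j) = (\<chi> i j. if i = j then 1 else 0)"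
    unfolding SL3_real_def by (rule field_SL3_inv) simp
qed

instance complex :: sl3_good
proof
  fix a b :: complex and r :: real and g :: "complex^3^3"
  show "cj (a + b) = cj a + cj b" "cj (a * b) = cj b * cj a" "cj (cj a) = a"
    "cj (r *\<^sub>R (1::complex)) = r *\<^sub>R 1" by (simp_all add: cj_complex_def)
  show "(norm (coords a))\<^sup>2 *\<^sub>R (1::complex) = cj a * a" "(norm (coords a))\<^sup>2 *\<^sub>R (1::complex) = a * cj a"
    unfolding cj_complex_def coords_complex_def norm4 by (simp_all add: complex_eq_iff power2_eq_square)
  show "g \<in> SL3 \<Longrightarrow> \<exists>h. (\<chi> i j. \<Sum>k\<in>UNIV. g$i$k * h$k$j) = (\<chi> i j. if i = j then 1 else 0)
      \<and> (\<chi> i j. \<Sum>k\<in>UNIV. h$i$k * g$k$j) = (\<chi> i j. if i = j then 1 else 0)"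
    unfolding SL3_complex_def by (rule field_SL3_inv) simp
qed
lemma quat_SL3_inv: assumes "det (quat_cmat g) = 1" shows "\<exists>h. g ** h = mat 1 \<and> h ** g = mat 1"
proof -
  define M where "M = quat_cmat g"
  have "invertible M" using assms invertible_det_nz[of M] unfolding M_def by simp
  then obtain N where MN: "M ** N = mat 1" and NM: "N ** M = mat 1" unfolding invertible_def by blast
  have TM: "Tm M = M" unfolding M_def by (rule Tm_cmat)
  have 1: "M ** Tm N = mat 1" using arg_cong[OF MN, of Tm] unfolding Tm_mul Tm_1 TM .
  have 2: "Tm N ** M = mat 1" using arg_cong[OF NM, of Tm] unfolding Tm_mul Tm_1 TM .
  have "Tm N = Tm N ** (M ** N)" using MN by simp
  also have "\<dots> = (Tm N ** M) ** N" by (rule matrix_mul_assoc)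
  also have "\<dots> = N" using 2 by simp
  finally have TN: "Tm N = N" .
  have cN: "quat_cmat (qmat N) = N" by (rule Tm_fix[OF TN])
  have "quat_cmat (g ** qmat N) = quat_cmat (mat 1)" unfolding cmat_mul cmat_one cN M_def[symmetric] MN ..
  moreover have "quat_cmat (qmat N ** g) = quat_cmat (mat 1)" unfolding cmat_mul cmat_one cN M_def[symmetric] NM ..
  ultimately show ?thesis using cmat_inj by blast
qed

instance quat :: sl3_good
proof
  fix a b :: quat and r :: real and g :: "quat^3^3"
  show "cj (a + b) = cj a + cj b" "cj (a * b) = cj b * cj a" "cj (cj a) = a"
    "cj (r *\<^sub>R (1::quat)) = r *\<^sub>R 1"
    by (simp_all add: cj_quat_def quat_eq_iff plus_quat_def times_quat_def scaleR_quat_def one_quat_def algebra_simps)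
  show "(norm (coords a))\<^sup>2 *\<^sub>R (1::quat) = cj a * a" "(norm (coords a))\<^sup>2 *\<^sub>R (1::quat) = a * cj a"
    unfolding cj_quat_def coords_quat_def norm4
    by (simp_all add: quat_eq_iff times_quat_def scaleR_quat_def one_quat_def power2_eq_square algebra_simps)
  show "g \<in> SL3 \<Longrightarrow> \<exists>h. (\<chi> i j. \<Sum>k\<in>UNIV. g$i$k * h$k$j) = (\<chi> i j. if i = j then 1 else 0)
      \<and> (\<chi> i j. \<Sum>k\<in>UNIV. h$i$k * g$k$j) = (\<chi> i j. if i = j then 1 else 0)"
    unfolding SL3_quat_def using quat_SL3_inv[of g] unfolding matrix_matrix_mult_def mat_def by simp
qed

theorem lemma1p9:
  shows "lemma1p9_claim TYPE(real) \<and> lemma1p9_claim TYPE(complex) \<and> lemma1p9_claim TYPE(quat)"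
  using claim_generic[where 'a=real] claim_generic[where 'a=complex] claim_generic[where 'a=quat] by blast

end
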